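(* Let $M,N$ be weights of $\mathbb{R}^m,\mathbb{R}^n$, let $A\in\mathbb{R}^{m\times n}$ with $MA=AN$, and let $K\subseteq\mathbb{R}^n$ be a closed cone. Then $$(A\circ I\circ K)^{[*]}\subseteq (A^{[\dagger]})^{[*]}\circ I\circ K^{[*]}+\mathcal{N}\big((A\circ I)^{[*]}\big).$$ If moreover $A^{[\dagger]}\circ A\circ K\subseteq K$, then equality holds.
   Context: A weight is a real symmetric matrix $W$ with $W^2=I$. $\mathbb{R}^m$ and $\mathbb{R}^n$ carry weights $M\in\mathbb{R}^{m\times m}$ and $N\in\mathbb{R}^{n\times n}$, respectively. The indefinite inner product on the space with weight $W$ is $[x,y]=\langle x,Wy\rangle$. Indefinite matrix product: if $B$ has $p$ columns and $C$ has $p$ rows (or is a vector in $\mathbb{R}^p$), $p\in\{m,n\}$, and $W$ is the weight of $\mathbb{R}^p$, then $B\circ C:=BWC$. $I$ denotes an identity matrix of the appropriate size. Indefinite adjoint of $B\in\mathbb{R}^{p\times q}$: $B^{[*]}:=W_qB^TW_p$, where $W_p,W_q$ are the weights of $\mathbb{R}^p,\mathbb{R}^q$. Indefinite Moore–Penrose inverse: $A^{[\dagger]}$ is the unique $X\in\mathbb{R}^{n\times m}$ such that - $A\circ X\circ A=A$, - $X\circ A\circ X=X$, - $(A\circ X)^{[*]}=A\circ X$, - $(X\circ A)^{[*]}=X\circ A$. It equals $NA^\dagger M$. Range and null space: for a matrix $B$ with $q$ columns, $\mathcal{R}(B)=\{B\circ x:x\in\mathbb{R}^q\}$ and $\mathcal{N}(B)=\{x\in\mathbb{R}^q:B\circ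 x=0\}$. A cone is a nonempty set closed under addition and under multiplication by nonnegative scalars. For $S$ a subset of $\mathbb{R}^p$ with weight $W$, the dual is $S^{[*]}=\{x\in\mathbb{R}^p:[x,t]\ge0\ \forall t\in S\}$. For a matrix $B$ and a set $S$, $B\circ S=\{B\circ s:s\in S\}$. The sum of sets is the Minkowski sum. *)

theory Defs
  imports "HOL-Analysis.Analysis"
begin

text \<open>Vectors of R^p are real^'p, p x q matrices are real^'q^'p.
  A weight is a real symmetric matrix W with W^2 = I.\<close>

definition is_weight :: "real^'p^'p \<Rightarrow> bool" where
  "is_weight W \<longleftrightarrow> transpose W = W \<and> W ** W = mat 1"

text \<open>Indefinite product B o C = B W C, W the weight of the middle space.\<close>
definition imm :: "real^'p^'p \<Rightarrow> real^'p^'r \<Rightarrow> real^'q^'p \<Rightarrow> real^'q^'r" where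
  "imm W B C = B ** W ** C"

definition imv :: "real^'p^'p \<Rightarrow> real^'p^'r \<Rightarrow> real^'p \<Rightarrow> real^'r" where
  "imv W B x = B *v (W *v x)"

definition imset :: "real^'p^'p \<Rightarrow> real^'p^'r \<Rightarrow> (real^'p) set \<Rightarrow> (real^'r) set" where
  "imset W B S = (\<lambda>s. imv W B s) ` S"

text \<open>Indefinite adjoint of B in R^{p x q}: Wq B^T Wp.\<close>
definition iadj :: "real^'p^'p \<Rightarrow> real^'q^'q \<Rightarrow> real^'q^'p \<Rightarrow> real^'p^'q" where
  "iadj Wp Wq B = Wq ** transpose B ** Wp"

text \<open>Indefinite Moore-Penrose inverse (M weight of R^m, N weight of R^n, A in R^{m x n}).\<close>
definition impinv :: "real^'m^'m \<Rightarrow> real^'n^'n \<Rightarrow> real^'n^'m \<Rightarrow> real^'m^'n" where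
  "impinv M N A = (THE X. imm M (imm N A X) A = A \<and> imm N (imm M X A) X = X
      \<and> iadj M M (imm N A X) = imm N A X \<and> iadj N N (imm M X A) = imm M X A)"

text \<open>Null space of B (q columns, weight Wq of R^q).\<close>
definition inull :: "real^'q^'q \<Rightarrow> real^'q^'p \<Rightarrow> (real^'q) set" where
  "inull Wq B = {x. imv Wq B x = 0}"

definition is_cone :: "('a::real_vector) set \<Rightarrow> bool" where
  "is_cone K \<longleftrightarrow> K \<noteq> {} \<and> (\<forall>x\<in>K. \<forall>y\<in>K. x + y \<in> K) \<and> (\<forall>x\<in>K. \<forall>c::real. c \<ge> 0 \<longrightarrow> c *\<^sub>R x \<in> K)"

text \<open>Indefinite dual: {x. [x,t] >= 0 for all t in S}, [x,y] = <x, W y>.\<close>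
definition idual :: "real^'p^'p \<Rightarrow> (real^'p) set \<Rightarrow> (real^'p) set" where
  "idual W S = {x. \<forall>t\<in>S. inner x (W *v t) \<ge> 0}"

definition msum :: "('a::plus) set \<Rightarrow> 'a set \<Rightarrow> 'a set" where
  "msum S T = {a + b | a b. a \<in> S \<and> b \<in> T}"

end

theory Submission
  imports Defs
begin


lemma proj_exists:
  fixes S :: "(real^'m) set"
  assumes "subspace S"
  shows "\<exists>P::real^'m^'m. transpose P = P \<and> (\<forall>x. P *v x \<in> S) \<and> (\<forall>x\<in>S. P *v x = x)"
proof -
  obtain C where C: "C \<subseteq> S" "pairwise orthogonal C" "\<And>x. x \<in> C \<Longrightarrow> norm x = 1"
     "independent C" "span C = S"
    using orthonormal_basis_subspace[OF assms] by metis
  have fin: "finite C" using C(4) independent_imp_finite by blast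
  define f where "f = (\<lambda>y::real^'m. \<Sum>c\<in>C. (c \<bullet> y) *\<^sub>R c)"
  have lin: "linear f" unfolding f_def
    by (intro linearI) (simp_all add: inner_add_right scaleR_add_left sum.distrib scaleR_sum_right)
  define P where "P = matrix f"
  have Pv: "P *v x = f x" for x unfolding P_def using lin by (simp add: matrix_works)
  have inS: "f x \<in> S" for x
    unfolding f_def using C(1) \<open>subspace S\<close>
    by (metis (no_types, lifting) C(5) span_scale span_sum span_base)
  have fixS: "f x = x" if "x \<in> S" for x
    using orthonormal_basis_expand[OF C(2) C(3), of x] C(5) fin that
    by (simp add: f_def inner_commute)
  have sym: "y \<bullet> f x = f y \<bullet> x" for x y
    unfolding f_def by (simp add: inner_sum_right inner_sum_left inner_commute mult.commute)
  have "transpose P = P"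
  proof -
    have "transpose P *v x = P *v x" for x
    proof (rule vector_eq_ldot[THEN iffD1], intro allI)
      fix y
      have "y \<bullet> (transpose P *v x) = (P *v y) \<bullet> x"
        by (metis dot_lmul_matrix transpose_matrix_vector transpose_transpose inner_commute vector_transpose_matrix)
      then show "y \<bullet> (transpose P *v x) = y \<bullet> (P *v x)" by (simp add: Pv sym)
    qed
    then show ?thesis by (simp add: matrix_eq)
  qed
  then show ?thesis using Pv inS fixS by metis
qed

lemma inner_mv: "(x::real^'m) \<bullet> ((B::real^'n^'m) *v y) = (transpose B *v x) \<bullet> y"
  by (metis dot_lmul_matrix transpose_matrix_vector)

lemma mm_add_r: "((A::real^'n^'m) + B) ** (C::real^'p^'n) = A ** C + B ** C"
  by (simp add: matrix_eq matrix_vector_mul_assoc[symmetric] algebra_simps)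
lemma mm_sub_l: "(A::real^'n^'m) ** ((B::real^'p^'n) - C) = A ** B - A ** C"
  by (simp add: matrix_eq matrix_vector_mul_assoc[symmetric] algebra_simps)
lemma mm_sub_r: "((A::real^'n^'m) - B) ** (C::real^'p^'n) = A ** C - B ** C"
  by (simp add: matrix_eq matrix_vector_mul_assoc[symmetric] algebra_simps)
lemma tr_add: "transpose ((A::real^'n^'m) + B) = transpose A + transpose B"
  by (simp add: transpose_def vec_eq_iff)
lemma tr_diff: "transpose ((A::real^'n^'m) - B) = transpose A - transpose B"
  by (simp add: transpose_def vec_eq_iff)

lemma mp_exists:
  fixes A :: "real^'n^'m"
  shows "\<exists>Y::real^'m^'n. A ** Y ** A = A \<and> Y ** A ** Y = Y \<and> transpose (A ** Y) = A ** Y \<and> transpose (Y ** A) = Y ** A"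
proof -
  have "subspace (range (\<lambda>x. A *v x))"
    using linear_subspace_image[OF matrix_vector_mul_linear[of A] subspace_UNIV] by simp
  then obtain P :: "real^'m^'m" where P: "transpose P = P" "\<And>x. P *v x \<in> range (\<lambda>x. A *v x)"
      "\<And>x. x \<in> range (\<lambda>x. A *v x) \<Longrightarrow> P *v x = x"
    using proj_exists by blast
  have PA: "P ** A = A" by (simp add: matrix_eq matrix_vector_mul_assoc[symmetric] P(3))
  have PP: "P ** P = P" by (simp add: matrix_eq matrix_vector_mul_assoc[symmetric] P(2,3))
  have AtP: "transpose A ** P = transpose A"
    by (metis PA P(1) matrix_transpose_mul)
  define G where "G = A ** transpose A + (mat 1 - P)"
  have ker: "x = 0" if "G *v x = 0" for x
  proof -
    have e1: "x \<bullet> (P *v x) = (P *v x) \<bullet> (P *v x)"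
      by (metis P(1) PP inner_mv matrix_vector_mul_assoc)
    have "0 = x \<bullet> (G *v x)" using that by simp
    also have "\<dots> = (transpose A *v x) \<bullet> (transpose A *v x) + (x - P *v x) \<bullet> (x - P *v x)"
      unfolding G_def
      by (simp add: matrix_vector_mult_add_rdistrib matrix_vector_mult_diff_rdistrib
          matrix_vector_mul_assoc[symmetric] inner_diff_right inner_add_right inner_diff_left
          inner_mv[of x A] e1 inner_commute[of "P *v x" x])
    finally have "transpose A *v x = 0" "x - P *v x = 0"
      by (smt (verit) inner_ge_zero inner_eq_zero_iff)+
    moreover obtain u where u: "P *v x = A *v u" using P(2) by blast
    ultimately have "x \<bullet> x = 0"
      by (metis eq_iff_diff_eq_0 inner_mv inner_zero_left)
    then show ?thesis by simp
  qed
  obtain H where HG: "H ** G = mat 1"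
    using matrix_left_invertible_ker[of G] ker by blast
  have GH: "G ** H = mat 1" using HG matrix_left_right_inverse by blast
  have Gt: "transpose G = G"
    unfolding G_def by (simp add: tr_add tr_diff transpose_mat matrix_transpose_mul P(1))
  have Ht: "transpose H = H"
  proof -
    have "transpose H ** G = mat 1"
      by (metis GH Gt matrix_transpose_mul transpose_mat)
    then have "transpose H = transpose H ** (G ** H)" using GH by simp
    also have "\<dots> = H" by (metis matrix_mul_assoc matrix_mul_lid \<open>transpose H ** G = mat 1\<close>)
    finally show ?thesis .
  qed
  have AAtP: "A ** transpose A ** P = A ** transpose A"
    by (metis matrix_mul_assoc AtP)
  have PG: "P ** G = A ** transpose A"
    unfolding G_def by (simp add: matrix_add_ldistrib mm_sub_l PP) (metis matrix_mul_assoc PA)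
  have AY: "A ** (transpose A ** H) = P"
  proof -
    have "A ** (transpose A ** H) = P ** G ** H" by (simp add: PG matrix_mul_assoc)
    also have "\<dots> = P" by (metis matrix_mul_assoc GH matrix_mul_rid)
    finally show ?thesis .
  qed
  have GIP: "G ** (mat 1 - P) = mat 1 - P"
    unfolding G_def by (simp add: mm_add_r mm_sub_l mm_sub_r PP AAtP)
  have HIP: "H ** (mat 1 - P) = mat 1 - P"
    by (metis GIP HG matrix_mul_assoc matrix_mul_lid)
  have AtIP: "transpose A ** (mat 1 - P) = 0"
    by (simp add: mm_sub_l AtP)
  have YAY: "transpose A ** H ** P = transpose A ** H"
  proof -
    have "transpose A ** H ** (mat 1 - P) = 0"
      by (metis matrix_mul_assoc HIP AtIP)
    then show ?thesis by (simp add: mm_sub_l)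
  qed
  show ?thesis
  proof (intro exI conjI)
    show "A ** (transpose A ** H) ** A = A" by (simp add: AY PA)
    show "transpose A ** H ** A ** (transpose A ** H) = transpose A ** H"
      by (metis AY YAY matrix_mul_assoc)
    show "transpose (A ** (transpose A ** H)) = A ** (transpose A ** H)" by (simp add: AY P(1))
    show "transpose (transpose A ** H ** A) = transpose A ** H ** A"
      by (simp add: matrix_transpose_mul Ht matrix_mul_assoc)
  qed
qed

lemma mp_unique:
  fixes A :: "real^'n^'m"
  assumes "A ** Y ** A = A" "Y ** A ** Y = Y" "transpose (A ** Y) = A ** Y" "transpose (Y ** A) = Y ** A"
    and "A ** Z ** A = A" "Z ** A ** Z = Z" "transpose (A ** Z) = A ** Z" "transpose (Z ** A) = Z ** A"
  shows "Y = Z"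
proof -
  have "Y = Y ** (A ** Y)" using assms(2) by (simp add: matrix_mul_assoc)
  also have "\<dots> = Y ** (transpose Y ** transpose A)" using assms(3) by (metis matrix_transpose_mul)
  also have "\<dots> = Y ** (transpose Y ** transpose (A ** Z ** A))" using assms(5) by simp
  also have "\<dots> = Y ** (transpose (A ** Y) ** transpose (A ** Z))"
    by (simp add: matrix_transpose_mul matrix_mul_assoc)
  also have "\<dots> = Y ** A ** Z" using assms(3,7) assms(1) by (simp add: matrix_mul_assoc)
  finally have 1: "Y = Y ** A ** Z" .
  have "Z = (Z ** A) ** Z" using assms(6) by simp
  also have "\<dots> = transpose A ** transpose Z ** Z" using assms(8) by (metis matrix_transpose_mul)
  also have "\<dots> = transpose (A ** Y ** A) ** transpose Z ** Z" using assms(1) by simp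
  also have "\<dots> = transpose (Y ** A) ** transpose (Z ** A) ** Z"
    by (simp add: matrix_transpose_mul matrix_mul_assoc)
  also have "\<dots> = Y ** A ** Z" using assms(4,8,6) by (metis matrix_mul_assoc)
  finally show ?thesis using 1 by simp
qed

definition mp :: "real^'n^'m \<Rightarrow> real^'m^'n \<Rightarrow> bool" where
  "mp A Y \<longleftrightarrow> A ** Y ** A = A \<and> Y ** A ** Y = Y \<and> transpose (A ** Y) = A ** Y \<and> transpose (Y ** A) = Y ** A"

lemma cancel2:
  fixes P :: "real^'m^'m" and Q :: "real^'n^'n"
  assumes "P ** P = mat 1" "Q ** Q = mat 1"
  shows "(P ** B ** Q = P ** C ** Q) \<longleftrightarrow> B = C"
proof
  assume h: "P ** B ** Q = P ** C ** Q"
  have "B = P ** (P ** B ** Q) ** Q" using assms by (metis matrix_mul_assoc matrix_mul_lid matrix_mul_rid)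
  also have "\<dots> = P ** (P ** C ** Q) ** Q" using h by simp
  also have "\<dots> = C" using assms by (metis matrix_mul_assoc matrix_mul_lid matrix_mul_rid)
  finally show "B = C" .
qed simp

lemma cond_iff:
  fixes M :: "real^'m^'m" and N :: "real^'n^'n" and A :: "real^'n^'m" and X :: "real^'m^'n"
  assumes wM: "is_weight M" and wN: "is_weight N"
  shows "(imm M (imm N A X) A = A \<and> imm N (imm M X A) X = X
      \<and> iadj M M (imm N A X) = imm N A X \<and> iadj N N (imm M X A) = imm M X A)
      \<longleftrightarrow> mp A (N ** X ** M)"
proof -
  have Mt: "transpose M = M" and MM: "M ** M = mat 1" using wM by (auto simp: is_weight_def)
  have Nt: "transpose N = N" and NN: "N ** N = mat 1" using wN by (auto simp: is_weight_def)
  have MM': "M ** (M ** Z) = Z" for Z :: "real^'p^'m" by (metis MM matrix_mul_assoc matrix_mul_lid)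
  have NN': "N ** (N ** Z) = Z" for Z :: "real^'p^'n" by (metis NN matrix_mul_assoc matrix_mul_lid)
  have I1: "mat 1 ** mat 1 = (mat 1 :: real^'m^'m)" by simp
  have I2: "mat 1 ** mat 1 = (mat 1 :: real^'n^'n)" by simp
  define Z where "Z = N ** X ** M"
  have X: "X = N ** Z ** M" unfolding Z_def by (simp add: matrix_mul_assoc[symmetric] MM NN MM' NN')
  note norm = matrix_mul_assoc[symmetric] matrix_transpose_mul Mt Nt MM NN MM' NN'
  have e1: "(imm M (imm N A X) A = A) \<longleftrightarrow> A ** Z ** A = A"
    unfolding X imm_def by (simp add: norm)
  have e2: "(imm N (imm M X A) X = X) \<longleftrightarrow> Z ** A ** Z = Z"
  proof -
    have h: "imm N (imm M (N ** Z ** M) A) (N ** Z ** M) = N ** (Z ** A ** Z) ** M"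
      unfolding imm_def by (simp add: norm)
    show ?thesis unfolding X by (simp only: h cancel2[OF NN MM])
  qed
  have e3: "(iadj M M (imm N A X) = imm N A X) \<longleftrightarrow> transpose (A ** Z) = A ** Z"
  proof -
    have h1: "imm N A (N ** Z ** M) = mat 1 ** (A ** Z) ** M"
      unfolding imm_def by (simp add: norm)
    have h2: "iadj M M (mat 1 ** (A ** Z) ** M) = mat 1 ** transpose (A ** Z) ** M"
      unfolding iadj_def by (simp add: norm)
    show ?thesis unfolding X by (simp only: h1 h2 cancel2[OF I1 MM])
  qed
  have e4: "(iadj N N (imm M X A) = imm M X A) \<longleftrightarrow> transpose (Z ** A) = Z ** A"
  proof -
    have h1: "imm M (N ** Z ** M) A = N ** (Z ** A) ** mat 1"
      unfolding imm_def by (simp add: norm)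
    have h2: "iadj N N (N ** (Z ** A) ** mat 1) = N ** transpose (Z ** A) ** mat 1"
      unfolding iadj_def by (simp add: norm)
    show ?thesis unfolding X by (simp only: h1 h2 cancel2[OF NN I2])
  qed
  show ?thesis using e1 e2 e3 e4 unfolding mp_def Z_def by blast
qed

lemma impinv_eq:
  fixes M :: "real^'m^'m" and N :: "real^'n^'n" and A :: "real^'n^'m" and Y :: "real^'m^'n"
  assumes wM: "is_weight M" and wN: "is_weight N" and Y: "mp A Y"
  shows "impinv M N A = N ** Y ** M"
proof -
  have MM: "M ** M = mat 1" using wM by (auto simp: is_weight_def)
  have NN: "N ** N = mat 1" using wN by (auto simp: is_weight_def)
  have inv: "N ** (N ** Z ** M) ** M = Z" for Z :: "real^'m^'n"
    by (metis MM NN matrix_mul_assoc matrix_mul_lid matrix_mul_rid)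
  show ?thesis unfolding impinv_def
  proof (rule the_equality)
    show "imm M (imm N A (N ** Y ** M)) A = A \<and> imm N (imm M (N ** Y ** M) A) (N ** Y ** M) = N ** Y ** M
      \<and> iadj M M (imm N A (N ** Y ** M)) = imm N A (N ** Y ** M) \<and> iadj N N (imm M (N ** Y ** M) A) = imm M (N ** Y ** M) A"
      using cond_iff[OF wM wN, of A "N ** Y ** M"] Y by (simp add: inv)
  next
    fix X assume "imm M (imm N A X) A = A \<and> imm N (imm M X A) X = X
      \<and> iadj M M (imm N A X) = imm N A X \<and> iadj N N (imm M X A) = imm M X A"
    then have "mp A (N ** X ** M)" using cond_iff[OF wM wN] by blast
    then have "N ** X ** M = Y" using Y mp_unique unfolding mp_def by blast
    then show "X = N ** Y ** M" by (metis MM NN matrix_mul_assoc matrix_mul_lid matrix_mul_rid)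
  qed
qed

theorem theorem3p4:
  fixes M :: "real^'m^'m" and N :: "real^'n^'n" and A :: "real^'n^'m"
    and K :: "(real^'n) set"
  assumes "is_weight M" and "is_weight N" and "M ** A = A ** N"
    and "is_cone K" and "closed K"
  shows "idual M (imset N (imm N A (mat 1)) K)
           \<subseteq> msum (imset N (imm N (iadj N M (impinv M N A)) (mat 1)) (idual N K))
                   (inull M (iadj M N (imm N A (mat 1))))
         \<and> (imset N (imm M (impinv M N A) A) K \<subseteq> K \<longrightarrow>
            idual M (imset N (imm N A (mat 1)) K)
              = msum (imset N (imm N (iadj N M (impinv M N A)) (mat 1)) (idual N K))
                     (inull M (iadj M N (imm N A (mat 1)))))"
proof -
  note wM = assms(1) and wN = assms(2) and MA = assms(3)
  have Mt: "transpose M = M" and MM: "M ** M = mat 1" using wM by (auto simp: is_weight_def)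
  have Nt: "transpose N = N" and NN: "N ** N = mat 1" using wN by (auto simp: is_weight_def)
  have Mv: "M *v (M *v x) = x" for x by (simp add: matrix_vector_mul_assoc MM)
  have Nv: "N *v (N *v x) = x" for x by (simp add: matrix_vector_mul_assoc NN)
  have MAv: "M *v (A *v k) = A *v (N *v k)" for k by (simp add: matrix_vector_mul_assoc MA)
  obtain Y where Y: "mp A Y" using mp_exists unfolding mp_def by blast
  have X: "impinv M N A = N ** Y ** M" using impinv_eq[OF wM wN Y] .
  have Y1: "A *v (Y *v (A *v x)) = A *v x" for x
    using Y unfolding mp_def by (metis matrix_vector_mul_assoc)
  have AYt: "transpose Y *v (transpose A *v x) = A *v (Y *v x)" for x
  proof -
    have "transpose Y ** transpose A = A ** Y" using Y unfolding mp_def by (metis matrix_transpose_mul)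
    then show ?thesis by (metis matrix_vector_mul_assoc)
  qed
  have AtAY: "transpose A *v (A *v (Y *v x)) = transpose A *v x" for x
  proof -
    have "transpose A ** (A ** Y) = transpose A"
      using Y unfolding mp_def by (metis matrix_transpose_mul matrix_mul_assoc)
    then show ?thesis by (metis matrix_vector_mul_assoc)
  qed
  note vnorm = matrix_vector_mul_assoc[symmetric] matrix_transpose_mul Mt Nt Mv Nv matrix_mul_rid transpose_mat
  have F1: "imset N (imm N A (mat 1)) K = (\<lambda>k. A *v k) ` K"
    unfolding imset_def imv_def imm_def by (simp add: vnorm)
  have F2: "imv N (imm N (iadj N M (impinv M N A)) (mat 1)) y = transpose Y *v y" for y
    unfolding X imv_def imm_def iadj_def by (simp add: vnorm)
  have F3: "imv M (iadj M N (imm N A (mat 1))) z = transpose A *v z" for z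
    unfolding imv_def imm_def iadj_def by (simp add: vnorm)
  have F4: "imv N (imm M (impinv M N A) A) k = N *v (Y *v (A *v (N *v k)))" for k
    unfolding X imv_def imm_def by (simp add: vnorm)
  have L: "idual M (imset N (imm N A (mat 1)) K) = {x. \<forall>k\<in>K. 0 \<le> x \<bullet> (A *v (N *v k))}"
    unfolding F1 idual_def by (auto simp: MAv)
  have R: "msum (imset N (imm N (iadj N M (impinv M N A)) (mat 1)) (idual N K))
                   (inull M (iadj M N (imm N A (mat 1))))
     = {transpose Y *v y + z | y z. (\<forall>t\<in>K. 0 \<le> y \<bullet> (N *v t)) \<and> transpose A *v z = 0}"
    unfolding msum_def imset_def inull_def idual_def F2 F3 by auto
  have part1: "idual M (imset N (imm N A (mat 1)) K)
           \<subseteq> msum (imset N (imm N (iadj N M (impinv M N A)) (mat 1)) (idual N K))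
                   (inull M (iadj M N (imm N A (mat 1))))"
    unfolding L R
  proof safe
    fix x assume hx: "\<forall>k\<in>K. 0 \<le> x \<bullet> (A *v (N *v k))"
    have "x = transpose Y *v (transpose A *v x) + (x - A *v (Y *v x))" unfolding AYt by simp
    moreover have "\<forall>t\<in>K. 0 \<le> (transpose A *v x) \<bullet> (N *v t)"
      using hx by (simp add: inner_mv)
    moreover have "transpose A *v (x - A *v (Y *v x)) = 0"
      by (simp only: matrix_vector_mult_diff_distrib AtAY diff_self)
    ultimately show "\<exists>y z. x = transpose Y *v y + z \<and> (\<forall>t\<in>K. 0 \<le> y \<bullet> (N *v t)) \<and> transpose A *v z = 0"
      by blast
  qed
  have part2: "idual M (imset N (imm N A (mat 1)) K)
              = msum (imset N (imm N (iadj N M (impinv M N A)) (mat 1)) (idual N K))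
                     (inull M (iadj M N (imm N A (mat 1))))"
    if hK: "imset N (imm M (impinv M N A) A) K \<subseteq> K"
  proof
    show "msum (imset N (imm N (iadj N M (impinv M N A)) (mat 1)) (idual N K))
                     (inull M (iadj M N (imm N A (mat 1)))) \<subseteq> idual M (imset N (imm N A (mat 1)) K)"
      unfolding L R
    proof safe
      fix y z k assume hy: "\<forall>t\<in>K. 0 \<le> y \<bullet> (N *v t)" and hz: "transpose A *v z = 0" and k: "k \<in> K"
      have tK: "N *v (Y *v (A *v (N *v k))) \<in> K"
        using hK k unfolding imset_def F4 by blast
      have "0 \<le> y \<bullet> (Y *v (A *v (N *v k)))" using hy tK by (metis Nv)
      moreover have "(transpose Y *v y) \<bullet> (A *v (N *v k)) = y \<bullet> (Y *v (A *v (N *v k)))"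
        by (metis inner_mv inner_commute transpose_transpose)
      moreover have "z \<bullet> (A *v (N *v k)) = 0" by (simp only: inner_mv hz inner_zero_left matrix_vector_mult_0_right)
      ultimately show "0 \<le> (transpose Y *v y + z) \<bullet> (A *v (N *v k))"
        by (simp add: inner_add_left)
    qed
  qed (rule part1)
  show ?thesis using part1 part2 by blast
qed

end
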